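(* Let $I=\{1,\dots,k+\ell\}\subseteq V$ where $C_1=\{1,\dots,k\}$ and $C_2=\{k+1,\dots,k+\ell\}$ are disjoint cliques of $G$ with no edges between $C_1$ and $C_2$. Let $X_I$ be a symmetric matrix with $X_I\succeq 0$, $X_I\geq 0$ (entrywise), diagonal entries $x_1,\dots,x_{k+\ell}$, $(X_I)_{i,j}=0$ whenever $i\neq j$ lie in the same clique $C_1$ or $C_2$, and entries $X_{i,k+j}$ for $1\leq i\leq k$, $1\leq j\leq \ell$. Then $X_I\in\mathrm{STAB}^2(G_I)$ if and only if $$\sum_{j=1}^{\ell}X_{i,k+j}\leq x_i\ (1\leq i\leq k),\qquad \sum_{i=1}^{k}X_{i,k+j}\leq x_{k+j}\ (1\leq j\leq \ell),\qquad \sum_{i=1}^{k+\ell}x_i\leq 1+\sum_{i=1}^k\sum_{j=1}^{\ell}X_{i,k+j}.$$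
   Context: Let $G$ be a simple graph with vertex set $V=\{1,\dots,n\}$ and edge set $E$; $G_I$ denotes the subgraph induced by $I\subseteq V$. For a graph $H$ with vertex set $I$, let $S(H)=\{s\in\{0,1\}^I: s_is_j=0\ \forall [i,j]\in E(H)\}$ (incidence vectors of stable sets, including the zero vector) and $\mathrm{STAB}^2(H)=\operatorname{conv}\{ss^T: s\in S(H)\}$. *)

theory Defs
  imports "HOL-Analysis.Analysis"
begin

text \<open>Matrices indexed by a finite set I of vertices are functions nat => nat => real;
only the entries on I x I are relevant. A graph H on vertex set I is given by an
edge relation E; the induced subgraph G_I has the edges of G between vertices of I.\<close>

text \<open>S(G_I): stable sets of the induced subgraph on I (as subsets of I,
identified with their incidence vectors; includes the empty set).\<close>
definition stable_sets :: "(nat \<Rightarrow> nat \<Rightarrow> bool) \<Rightarrow> nat set \<Rightarrow> nat set set" where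
  "stable_sets E I = {S. S \<subseteq> I \<and> (\<forall>i\<in>S. \<forall>j\<in>S. i \<noteq> j \<longrightarrow> \<not> E i j)}"

definition outer_ind :: "nat set \<Rightarrow> nat \<Rightarrow> nat \<Rightarrow> real" where
  "outer_ind S i j = indicator S i * indicator S j"

text \<open>STAB^2(G_I) = conv {s s^T : s in S(G_I)}, a convex hull of a finite set,
written out as the set of convex combinations (matrices compared on I x I).\<close>
definition STAB2 :: "(nat \<Rightarrow> nat \<Rightarrow> bool) \<Rightarrow> nat set \<Rightarrow> (nat \<Rightarrow> nat \<Rightarrow> real) set" where
  "STAB2 E I = {X. \<exists>w::nat set \<Rightarrow> real.
      (\<forall>S\<in>stable_sets E I. 0 \<le> w S) \<and> (\<Sum>S\<in>stable_sets E I. w S) = 1 \<and>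
      (\<forall>i\<in>I. \<forall>j\<in>I. X i j = (\<Sum>S\<in>stable_sets E I. w S * outer_ind S i j))}"

definition symmetric_on :: "nat set \<Rightarrow> (nat \<Rightarrow> nat \<Rightarrow> real) \<Rightarrow> bool" where
  "symmetric_on I X \<longleftrightarrow> (\<forall>i\<in>I. \<forall>j\<in>I. X i j = X j i)"

definition psd_on :: "nat set \<Rightarrow> (nat \<Rightarrow> nat \<Rightarrow> real) \<Rightarrow> bool" where
  "psd_on I X \<longleftrightarrow> symmetric_on I X \<and>
     (\<forall>v::nat \<Rightarrow> real. 0 \<le> (\<Sum>i\<in>I. \<Sum>j\<in>I. v i * X i j * v j))"

end

theory Submission imports Defs begin

lemma SS_eq:
  assumes D: "C1 \<inter> C2 = {}"
  and E: "\<forall>i\<in>C1\<union>C2. \<forall>j\<in>C1\<union>C2. i\<noteq>j \<longrightarrow> (E i j \<longleftrightarrow> (i\<in>C1 \<and> j\<in>C1) \<or> (i\<in>C2 \<and> j\<in>C2))"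
  shows "stable_sets E (C1\<union>C2) = insert {} ((\<lambda>a. {a})`(C1\<union>C2) \<union> (\<lambda>(i,j). {i,j})`(C1\<times>C2))"
proof
  show "stable_sets E (C1\<union>C2) \<subseteq> insert {} ((\<lambda>a. {a})`(C1\<union>C2) \<union> (\<lambda>(i,j). {i,j})`(C1\<times>C2))"
  proof
    fix S assume "S \<in> stable_sets E (C1\<union>C2)"
    hence sub: "S \<subseteq> C1\<union>C2" and st: "\<forall>i\<in>S. \<forall>j\<in>S. i \<noteq> j \<longrightarrow> \<not> E i j"
      by (auto simp: stable_sets_def)
    have u1: "\<And>x y. x\<in>S \<Longrightarrow> y\<in>S \<Longrightarrow> x\<in>C1 \<Longrightarrow> y\<in>C1 \<Longrightarrow> x=y"
      using st sub E by blast
    have u2: "\<And>x y. x\<in>S \<Longrightarrow> y\<in>S \<Longrightarrow> x\<in>C2 \<Longrightarrow> y\<in>C2 \<Longrightarrow> x=y"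
      using st sub E by blast
    show "S \<in> insert {} ((\<lambda>a. {a})`(C1\<union>C2) \<union> (\<lambda>(i,j). {i,j})`(C1\<times>C2))"
    proof (cases "S = {}")
      case True then show ?thesis by simp
    next
      case False
      show ?thesis
      proof (cases "S \<inter> C1 = {}")
        case True
        then obtain x where "x \<in> S" "x \<in> C2" using False sub by blast
        hence "S = {x}" using u2 True sub by blast
        then show ?thesis using \<open>x\<in>C2\<close> by auto
      next
        case F1: False
        then obtain i where i: "i \<in> S" "i \<in> C1" by blast
        show ?thesis
        proof (cases "S \<inter> C2 = {}")
          case True
          hence "S = {i}" using u1 i sub by blast
          then show ?thesis using i by auto
        next
          case False
          then obtain j where j: "j \<in> S" "j \<in> C2" by blast
          hence "S = {i,j}" using u1 u2 i sub by blast
          then show ?thesis using i j by force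
        qed
      qed
    qed
  qed
next
  show "insert {} ((\<lambda>a. {a})`(C1\<union>C2) \<union> (\<lambda>(i,j). {i,j})`(C1\<times>C2)) \<subseteq> stable_sets E (C1\<union>C2)"
    using D E by (auto simp: stable_sets_def)
qed

lemma sum_SS:
  fixes g :: "nat set \<Rightarrow> real"
  assumes F: "finite C1" "finite C2" and D: "C1 \<inter> C2 = {}"
  shows "sum g (insert {} ((\<lambda>a. {a})`(C1\<union>C2) \<union> (\<lambda>(i,j). {i,j})`(C1\<times>C2)))
    = g {} + (\<Sum>a\<in>C1\<union>C2. g {a}) + (\<Sum>i\<in>C1. \<Sum>j\<in>C2. g {i,j})"
proof -
  have inj1: "inj_on (\<lambda>a. {a}) (C1\<union>C2)" by (auto simp: inj_on_def)
  have inj2: "inj_on (\<lambda>(i,j). {i,j}) (C1\<times>C2)"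
    using D by (auto simp: inj_on_def doubleton_eq_iff)
  have dis: "(\<lambda>a. {a})`(C1\<union>C2) \<inter> (\<lambda>(i,j). {i,j})`(C1\<times>C2) = {}"
    using D by (auto simp: doubleton_eq_iff)
  have "sum g (insert {} ((\<lambda>a. {a})`(C1\<union>C2) \<union> (\<lambda>(i,j). {i,j})`(C1\<times>C2)))
     = g {} + sum g ((\<lambda>a. {a})`(C1\<union>C2) \<union> (\<lambda>(i,j). {i,j})`(C1\<times>C2))"
    using F by (subst sum.insert) auto
  also have "\<dots> = g {} + (sum g ((\<lambda>a. {a})`(C1\<union>C2)) + sum g ((\<lambda>(i,j). {i,j})`(C1\<times>C2)))"
    using F dis by (subst sum.union_disjoint) auto
  also have "sum g ((\<lambda>a. {a})`(C1\<union>C2)) = (\<Sum>a\<in>C1\<union>C2. g {a})"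
    using sum.reindex[OF inj1] by simp
  also have "sum g ((\<lambda>(i,j). {i,j})`(C1\<times>C2)) = (\<Sum>(i,j)\<in>C1\<times>C2. g {i,j})"
    using sum.reindex[OF inj2] by (simp add: case_prod_unfold)
  also have "\<dots> = (\<Sum>i\<in>C1. \<Sum>j\<in>C2. g {i,j})"
    by (rule sum.cartesian_product[symmetric])
  finally show ?thesis by simp
qed


lemma oi0[simp]: "outer_ind {} p q = 0" by (simp add: outer_ind_def)
lemma oi1[simp]: "outer_ind {a} p q = (if a = p \<and> a = q then 1 else 0)" by (auto simp add: outer_ind_def indicator_def)
lemma oi2[simp]: "outer_ind {i,j} p q = (if (p=i \<or> p=j) \<and> (q=i \<or> q=j) then 1 else 0)"
  by (auto simp add: outer_ind_def)

lemma ent: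
  fixes w :: "nat set \<Rightarrow> real"
  assumes F: "finite C1" "finite C2" and D: "C1 \<inter> C2 = {}"
    and p: "p \<in> C1\<union>C2" and q: "q \<in> C1\<union>C2"
  shows "(\<Sum>S\<in>insert {} ((\<lambda>a. {a})`(C1\<union>C2) \<union> (\<lambda>(i,j). {i,j})`(C1\<times>C2)). w S * outer_ind S p q)
    = (if p = q then w {p} + (if p\<in>C1 then (\<Sum>j\<in>C2. w {p,j}) else (\<Sum>i\<in>C1. w {i,p}))
       else if p\<in>C1 \<and> q\<in>C2 then w {p,q} else if p\<in>C2 \<and> q\<in>C1 then w {q,p} else 0)"
proof -
  have s1: "(\<Sum>a\<in>C1\<union>C2. w {a} * outer_ind {a} p q) = (if p = q then w {p} else 0)"
  proof (cases "p = q")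
    case True
    then show ?thesis using p F by (simp add: if_distrib sum.delta cong: if_cong)
  next
    case False
    then show ?thesis by (auto intro!: sum.neutral)
  qed
  have s2: "(\<Sum>i\<in>C1. \<Sum>j\<in>C2. w {i,j} * outer_ind {i,j} p q) = 
    (if p = q then (if p\<in>C1 then (\<Sum>j\<in>C2. w {p,j}) else (\<Sum>i\<in>C1. w {i,p}))
       else if p\<in>C1 \<and> q\<in>C2 then w {p,q} else if p\<in>C2 \<and> q\<in>C1 then w {q,p} else 0)"
  proof -
    have "(\<Sum>i\<in>C1. \<Sum>j\<in>C2. w {i,j} * outer_ind {i,j} p q) = 
          (\<Sum>i\<in>C1. \<Sum>j\<in>C2. if (p=i \<or> p=j) \<and> (q=i \<or> q=j) then w {i,j} else 0)"
      by (intro sum.cong) auto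
    also have "\<dots> = (if p = q then (if p\<in>C1 then (\<Sum>j\<in>C2. w {p,j}) else (\<Sum>i\<in>C1. w {i,p}))
       else if p\<in>C1 \<and> q\<in>C2 then w {p,q} else if p\<in>C2 \<and> q\<in>C1 then w {q,p} else 0)"
    proof (cases "p = q")
      case pq: True
      show ?thesis
      proof (cases "p \<in> C1")
        case True
        have "(\<Sum>i\<in>C1. \<Sum>j\<in>C2. if (p=i \<or> p=j) \<and> (q=i \<or> q=j) then w {i,j} else 0)
          = (\<Sum>i\<in>C1. if p = i then (\<Sum>j\<in>C2. w {i,j}) else 0)"
          using True D pq F \<open>p\<in>C1\<close> by (intro sum.cong) (auto simp: sum.delta disjoint_iff)
        also have "\<dots> = (\<Sum>j\<in>C2. w {p,j})" using True F by (simp add: sum.delta)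
        finally show ?thesis using True pq by simp
      next
        case False
        hence p2: "p \<in> C2" using p by blast
        have "(\<Sum>i\<in>C1. \<Sum>j\<in>C2. if (p=i \<or> p=j) \<and> (q=i \<or> q=j) then w {i,j} else 0)
          = (\<Sum>i\<in>C1. w {i,p})"
        proof (rule sum.cong[OF refl])
          fix x assume x: "x \<in> C1"
          hence "p \<noteq> x" using False by blast
          hence "(\<Sum>j\<in>C2. if (p=x \<or> p=j) \<and> (q=x \<or> q=j) then w {x,j} else 0)
             = (\<Sum>j\<in>C2. if p = j then w {x,j} else 0)" using pq by (intro sum.cong) auto
          also have "\<dots> = w {x,p}" using p2 F by (simp add: sum.delta')
          finally show "(\<Sum>j\<in>C2. if (p=x \<or> p=j) \<and> (q=x \<or> q=j) then w {x,j} else 0) = w {x,p}" .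
        qed
        then show ?thesis using False pq by simp
      qed
    next
      case npq: False
      show ?thesis
      proof (cases "p\<in>C1 \<and> q\<in>C2")
        case True
        have "(\<Sum>i\<in>C1. \<Sum>j\<in>C2. if (p=i \<or> p=j) \<and> (q=i \<or> q=j) then w {i,j} else 0)
          = (\<Sum>i\<in>C1. if p = i then w {i,q} else 0)"
          using True D npq F by (intro sum.cong) (auto simp: sum.delta if_distrib disjoint_iff cong: if_cong intro!: sum.neutral)
        also have "\<dots> = w {p,q}" using True F by (simp add: sum.delta)
        finally show ?thesis using True npq by simp
      next
        case F2: False
        show ?thesis
        proof (cases "p\<in>C2 \<and> q\<in>C1")
          case True
          have "(\<Sum>i\<in>C1. \<Sum>j\<in>C2. if (p=i \<or> p=j) \<and> (q=i \<or> q=j) then w {i,j} else 0)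
            = (\<Sum>i\<in>C1. if q = i then w {i,p} else 0)"
            using True D npq F by (intro sum.cong) (auto simp: sum.delta if_distrib disjoint_iff cong: if_cong intro!: sum.neutral)
          also have "\<dots> = w {q,p}" using True F by (simp add: sum.delta)
          finally show ?thesis using True npq F2 D by auto
        next
          case False
          have "(\<Sum>i\<in>C1. \<Sum>j\<in>C2. if (p=i \<or> p=j) \<and> (q=i \<or> q=j) then w {i,j} else 0) = 0"
            using False F2 npq p q D by (intro sum.neutral ballI) auto
          then show ?thesis using False F2 npq by auto
        qed
      qed
    qed
    finally show ?thesis .
  qed
  show ?thesis
    apply (subst sum_SS[OF F D])
    apply (subst s1)
    apply (subst s2)
    apply simp
    done
qed

lemma shift_sum: "(\<Sum>j=1..l. f (k+j::nat)) = (\<Sum>j\<in>{k+1..k+l}. (f j :: real))"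
  using sum.shift_bounds_cl_nat_ivl[of f 1 k l] by (simp add: add.commute)

theorem lemmaL5:
  fixes n k l :: nat and E :: "nat \<Rightarrow> nat \<Rightarrow> bool" and X :: "nat \<Rightarrow> nat \<Rightarrow> real"
  assumes sym: "\<forall>i\<in>{1..n}. \<forall>j\<in>{1..n}. E i j = E j i"
    and irrefl: "\<forall>i\<in>{1..n}. \<not> E i i"
    and kl: "k + l \<le> n"
    and C1: "\<forall>i\<in>{1..k}. \<forall>j\<in>{1..k}. i \<noteq> j \<longrightarrow> E i j"
    and C2: "\<forall>i\<in>{k+1..k+l}. \<forall>j\<in>{k+1..k+l}. i \<noteq> j \<longrightarrow> E i j"
    and C12: "\<forall>i\<in>{1..k}. \<forall>j\<in>{k+1..k+l}. \<not> E i j"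
    and Xsym: "symmetric_on {1..k+l} X"
    and Xpsd: "psd_on {1..k+l} X"
    and Xnn: "\<forall>i\<in>{1..k+l}. \<forall>j\<in>{1..k+l}. 0 \<le> X i j"
    and X1: "\<forall>i\<in>{1..k}. \<forall>j\<in>{1..k}. i \<noteq> j \<longrightarrow> X i j = 0"
    and X2: "\<forall>i\<in>{k+1..k+l}. \<forall>j\<in>{k+1..k+l}. i \<noteq> j \<longrightarrow> X i j = 0"
  shows "X \<in> STAB2 E {1..k+l} \<longleftrightarrow>
           (\<forall>i\<in>{1..k}. (\<Sum>j=1..l. X i (k+j)) \<le> X i i) \<and>
           (\<forall>j\<in>{1..l}. (\<Sum>i=1..k. X i (k+j)) \<le> X (k+j) (k+j)) \<and>
           (\<Sum>i=1..k+l. X i i) \<le> 1 + (\<Sum>i=1..k. \<Sum>j=1..l. X i (k+j))"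
proof -
  define A where "A = {1..k}"
  define B where "B = {k+1..k+l}"
  have IAB: "{1..k+l} = A \<union> B" unfolding A_def B_def by auto
  have D: "A \<inter> B = {}" unfolding A_def B_def by auto
  have FA: "finite A" and FB: "finite B" unfolding A_def B_def by auto
  have Econd: "\<forall>i\<in>A\<union>B. \<forall>j\<in>A\<union>B. i\<noteq>j \<longrightarrow> (E i j \<longleftrightarrow> (i\<in>A \<and> j\<in>A) \<or> (i\<in>B \<and> j\<in>B))"
  proof (intro ballI impI)
    fix i j assume i: "i \<in> A\<union>B" and j: "j \<in> A\<union>B" and ij: "i \<noteq> j"
    have iI: "i \<in> {1..n}" and jI: "j \<in> {1..n}" using i j kl unfolding A_def B_def by auto
    have s: "E i j = E j i" using sym iI jI by blast
    show "E i j \<longleftrightarrow> (i\<in>A \<and> j\<in>A) \<or> (i\<in>B \<and> j\<in>B)"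
    proof (cases "i \<in> A")
      case True
      then show ?thesis
      proof (cases "j \<in> A")
        case True then show ?thesis using \<open>i\<in>A\<close> C1 ij unfolding A_def by blast
      next
        case False then have "j \<in> B" using j by blast
        then show ?thesis using \<open>i\<in>A\<close> C12 D unfolding A_def B_def by blast
      qed
    next
      case False then have iB: "i \<in> B" using i by blast
      then show ?thesis
      proof (cases "j \<in> A")
        case True then show ?thesis using iB C12 D s unfolding A_def B_def by blast
      next
        case False then have "j \<in> B" using j by blast
        then show ?thesis using iB C2 ij unfolding B_def by blast
      qed
    qed
  qed
  define T where "T = insert {} ((\<lambda>a. {a})`(A\<union>B) \<union> (\<lambda>(i,j). {i,j})`(A\<times>B))"
  have SS: "stable_sets E {1..k+l} = T" unfolding IAB T_def by (rule SS_eq[OF D Econd])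
  have ENT: "\<And>w p q. p \<in> A\<union>B \<Longrightarrow> q \<in> A\<union>B \<Longrightarrow> (\<Sum>S\<in>T. w S * outer_ind S p q)
    = (if p = q then w {p} + (if p\<in>A then (\<Sum>j\<in>B. w {p,j}) else (\<Sum>i\<in>A. w {i,p}))
       else if p\<in>A \<and> q\<in>B then w {p,q} else if p\<in>B \<and> q\<in>A then w {q,p} else 0)"
    unfolding T_def by (rule ent[OF FA FB D])
  have TOT: "\<And>w::nat set \<Rightarrow> real. sum w T = w {} + (\<Sum>a\<in>A\<union>B. w {a}) + (\<Sum>i\<in>A. \<Sum>j\<in>B. w {i,j})"
    unfolding T_def by (rule sum_SS[OF FA FB D])
  have NN: "\<And>w::nat set \<Rightarrow> real. (\<forall>S\<in>T. 0 \<le> w S) \<longleftrightarrow> 0 \<le> w {} \<and> (\<forall>a\<in>A\<union>B. 0 \<le> w {a}) \<and> (\<forall>i\<in>A. \<forall>j\<in>B. 0 \<le> w {i,j})"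
    unfolding T_def by auto
  have R1: "(\<Sum>j=1..l. X i (k+j)) = (\<Sum>j\<in>B. X i j)" for i unfolding B_def by (rule shift_sum)
  have R2: "(\<Sum>i=1..k. X i (k+j)) = (\<Sum>i\<in>A. X i (k+j))" for j unfolding A_def ..
  have R3: "(\<Sum>i=1..k+l. X i i) = (\<Sum>i\<in>A. X i i) + (\<Sum>i\<in>B. X i i)"
    unfolding IAB using FA FB D by (rule sum.union_disjoint)
  have R4: "(\<Sum>i=1..k. \<Sum>j=1..l. X i (k+j)) = (\<Sum>i\<in>A. \<Sum>j\<in>B. X i j)"
    unfolding R1 A_def ..
  have R5: "(\<forall>j\<in>{1..l}. (\<Sum>i=1..k. X i (k+j)) \<le> X (k+j) (k+j)) \<longleftrightarrow> (\<forall>j\<in>B. (\<Sum>i\<in>A. X i j) \<le> X j j)"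
  proof -
    have "B = (\<lambda>j. k+j) ` {1..l}" unfolding B_def
      by (auto simp: image_iff intro!: bexI[where x="x - k" for x])
    then show ?thesis unfolding R2 by blast
  qed
  have goal: "X \<in> STAB2 E (A\<union>B) \<longleftrightarrow>
           (\<forall>i\<in>A. (\<Sum>j\<in>B. X i j) \<le> X i i) \<and>
           (\<forall>j\<in>B. (\<Sum>i\<in>A. X i j) \<le> X j j) \<and>
           (\<Sum>i\<in>A\<union>B. X i i) \<le> 1 + (\<Sum>i\<in>A. \<Sum>j\<in>B. X i j)"
  proof -
    have SS': "stable_sets E (A\<union>B) = T" using SS IAB by simp
    have U: "(\<Sum>i\<in>A\<union>B. f i) = (\<Sum>i\<in>A. f i) + (\<Sum>i\<in>B. (f i::real))" for f
      using FA FB D by (rule sum.union_disjoint)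
    have Xs: "X i j = X j i" if "i \<in> A\<union>B" "j \<in> A\<union>B" for i j
      using Xsym that IAB unfolding symmetric_on_def by blast
    have X1': "X i j = 0" if "i \<in> A" "j \<in> A" "i \<noteq> j" for i j using X1 that A_def by blast
    have X2': "X i j = 0" if "i \<in> B" "j \<in> B" "i \<noteq> j" for i j using X2 that B_def by blast
    have Xn: "0 \<le> X i j" if "i \<in> A\<union>B" "j \<in> A\<union>B" for i j using Xnn that IAB by blast
    show ?thesis
    proof
      assume "X \<in> STAB2 E (A\<union>B)"
      then obtain w where wn: "\<forall>S\<in>T. 0 \<le> w S" and w1: "sum w T = 1"
        and wX: "\<forall>i\<in>A\<union>B. \<forall>j\<in>A\<union>B. X i j = (\<Sum>S\<in>T. w S * outer_ind S i j)"
        unfolding STAB2_def SS' by blast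
      have wn': "0 \<le> w {}" "\<forall>a\<in>A\<union>B. 0 \<le> w {a}" "\<forall>i\<in>A. \<forall>j\<in>B. 0 \<le> w {i,j}"
        using wn NN by blast+
      have XA: "X i i = w {i} + (\<Sum>j\<in>B. w {i,j})" if "i \<in> A" for i
        using wX that ENT[of i i w] by simp
      have XB: "X j j = w {j} + (\<Sum>i\<in>A. w {i,j})" if "j \<in> B" for j
        using wX that ENT[of j j w] D by auto
      have XAB: "X i j = w {i,j}" if "i \<in> A" "j \<in> B" for i j
        using wX that ENT[of i j w] D by auto
      have g1: "\<forall>i\<in>A. (\<Sum>j\<in>B. X i j) \<le> X i i"
      proof
        fix i assume i: "i \<in> A"
        have "(\<Sum>j\<in>B. X i j) = (\<Sum>j\<in>B. w {i,j})" using XAB i by simp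
        then show "(\<Sum>j\<in>B. X i j) \<le> X i i" using XA[OF i] wn'(2) i by auto
      qed
      have g2: "\<forall>j\<in>B. (\<Sum>i\<in>A. X i j) \<le> X j j"
      proof
        fix j assume j: "j \<in> B"
        have "(\<Sum>i\<in>A. X i j) = (\<Sum>i\<in>A. w {i,j})" using XAB j by simp
        then show "(\<Sum>i\<in>A. X i j) \<le> X j j" using XB[OF j] wn'(2) j by auto
      qed
      have P: "(\<Sum>i\<in>A. \<Sum>j\<in>B. X i j) = (\<Sum>i\<in>A. \<Sum>j\<in>B. w {i,j})" using XAB by simp
      have "(\<Sum>i\<in>A\<union>B. X i i) = (\<Sum>i\<in>A. w {i} + (\<Sum>j\<in>B. w {i,j})) + (\<Sum>j\<in>B. w {j} + (\<Sum>i\<in>A. w {i,j}))"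
        unfolding U using XA XB by simp
      also have "\<dots> = (\<Sum>a\<in>A\<union>B. w {a}) + 2 * (\<Sum>i\<in>A. \<Sum>j\<in>B. w {i,j})"
        unfolding U sum.distrib using sum.swap[where A=B and B=A and g="\<lambda>j i. w {i,j}"] by simp
      finally have "(\<Sum>i\<in>A\<union>B. X i i) = (\<Sum>a\<in>A\<union>B. w {a}) + 2 * (\<Sum>i\<in>A. \<Sum>j\<in>B. w {i,j})" .
      moreover have "1 = w {} + (\<Sum>a\<in>A\<union>B. w {a}) + (\<Sum>i\<in>A. \<Sum>j\<in>B. w {i,j})" using w1 TOT by simp
      ultimately have g3: "(\<Sum>i\<in>A\<union>B. X i i) \<le> 1 + (\<Sum>i\<in>A. \<Sum>j\<in>B. X i j)"
        using wn'(1) P by linarith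
      show "(\<forall>i\<in>A. (\<Sum>j\<in>B. X i j) \<le> X i i) \<and>
           (\<forall>j\<in>B. (\<Sum>i\<in>A. X i j) \<le> X j j) \<and>
           (\<Sum>i\<in>A\<union>B. X i i) \<le> 1 + (\<Sum>i\<in>A. \<Sum>j\<in>B. X i j)" using g1 g2 g3 by blast
    next
      assume H: "(\<forall>i\<in>A. (\<Sum>j\<in>B. X i j) \<le> X i i) \<and>
           (\<forall>j\<in>B. (\<Sum>i\<in>A. X i j) \<le> X j j) \<and>
           (\<Sum>i\<in>A\<union>B. X i i) \<le> 1 + (\<Sum>i\<in>A. \<Sum>j\<in>B. X i j)"
      define sa where "sa a = (if a \<in> A then X a a - (\<Sum>j\<in>B. X a j) else X a a - (\<Sum>i\<in>A. X i a))" for a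
      define P where "P = (\<Sum>i\<in>A. \<Sum>j\<in>B. X i j)"
      define w where "w S = (if S = {} then 1 - (\<Sum>a\<in>A\<union>B. X a a) + P
         else if card S = 1 then sa (Min S) else X (Min S) (Max S))" for S
      have lt: "i < j" if "i \<in> A" "j \<in> B" for i j using that unfolding A_def B_def by auto
      have w0: "w {} = 1 - (\<Sum>a\<in>A\<union>B. X a a) + P" by (simp add: w_def)
      have w1: "w {a} = sa a" for a by (simp add: w_def)
      have w2: "w {i,j} = X i j" if "i \<in> A" "j \<in> B" for i j
        using lt[OF that] by (simp add: w_def)
      have nn: "\<forall>S\<in>T. 0 \<le> w S"
        unfolding NN w0 w1
      proof (intro conjI ballI)
        show "0 \<le> 1 - (\<Sum>a\<in>A\<union>B. X a a) + P" using H P_def by linarith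
        fix a assume a: "a \<in> A\<union>B"
        show "0 \<le> sa a" using H a unfolding sa_def by auto
      next
        fix i j assume "i \<in> A" "j \<in> B"
        then show "0 \<le> w {i,j}" using w2 Xn by auto
      qed
      have tot: "sum w T = 1"
      proof -
        have "sum w T = 1 - (\<Sum>a\<in>A\<union>B. X a a) + P + (\<Sum>a\<in>A\<union>B. sa a) + P"
          unfolding TOT w0 w1 P_def using w2 by simp
        also have "(\<Sum>a\<in>A\<union>B. sa a) = (\<Sum>a\<in>A\<union>B. X a a) - 2 * P"
        proof -
          have sA: "(\<Sum>a\<in>A. sa a) = (\<Sum>a\<in>A. X a a) - (\<Sum>a\<in>A. \<Sum>j\<in>B. X a j)"
            unfolding sum_subtractf[symmetric] by (rule sum.cong) (auto simp: sa_def)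
          have sB: "(\<Sum>a\<in>B. sa a) = (\<Sum>a\<in>B. X a a) - (\<Sum>a\<in>B. \<Sum>i\<in>A. X i a)"
            unfolding sum_subtractf[symmetric] using D by (intro sum.cong) (auto simp: sa_def)
          have sw: "(\<Sum>a\<in>B. \<Sum>i\<in>A. X i a) = P" unfolding P_def by (rule sum.swap)
          show ?thesis unfolding U sA sB sw P_def by simp
        qed
        finally show ?thesis by simp
      qed
      have ent: "X p q = (\<Sum>S\<in>T. w S * outer_ind S p q)" if p: "p \<in> A\<union>B" and q: "q \<in> A\<union>B" for p q
      proof -
        have e: "(\<Sum>S\<in>T. w S * outer_ind S p q) = (if p = q then w {p} + (if p\<in>A then (\<Sum>j\<in>B. w {p,j}) else (\<Sum>i\<in>A. w {i,p}))
          else if p\<in>A \<and> q\<in>B then w {p,q} else if p\<in>B \<and> q\<in>A then w {q,p} else 0)"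
          by (rule ENT[OF p q])
        show ?thesis
        proof (cases "p = q")
          case True
          show ?thesis
          proof (cases "p \<in> A")
            case pA: True
            have "(\<Sum>j\<in>B. w {p,j}) = (\<Sum>j\<in>B. X p j)" using w2 pA by simp
            then show ?thesis using e True pA by (simp add: w1 sa_def)
          next
            case False
            hence pB: "p \<in> B" using p by blast
            have "(\<Sum>i\<in>A. w {i,p}) = (\<Sum>i\<in>A. X i p)" using w2 pB by simp
            then show ?thesis using e True False by (simp add: w1 sa_def)
          qed
        next
          case False
          then show ?thesis using e w2 Xs[OF p q] X1' X2' p q by auto
        qed
      qed
      show "X \<in> STAB2 E (A\<union>B)" unfolding STAB2_def SS' using nn tot ent by blast
    qed
  qed
  show ?thesis using goal unfolding R1 R4 R5 IAB A_def by simp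
qed

end
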